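(* Let $n\in\mathbb{N}_+$, $i\in\{0,\dots,n\}$ and let $l$ be a positive integer. Then $$\|B_n^l e_{i+1}\|_1=\begin{cases}\Big(\sum_{j=0}^{i}\binom{n}{j}\Big)^l & \text{if } i\le\lfloor n/2\rfloor,\\[4pt] \Big(\sum_{j=0}^{\lfloor n/2\rfloor}\binom{n}{j}\Big)^l+l\sum_{s=\lfloor n/2\rfloor+1}^{i}\Big(\sum_{j=0}^{n-s}\binom{n}{j}\Big)^{l-1}\binom{n}{n-s} & \text{if } i>\lfloor n/2\rfloor,\end{cases}$$ where $e_{i+1}\in\mathbb{R}^{n+1}$ is the $(i+1)$-th standard unit vector.
   Context: $V$ denotes sequences $(v_j)_{j\in\mathbb{N}}$ (indexed from $0$) of nonnegative integers with finite sum; ${\rm e}_k\in V$ has $({\rm e}_k)_j=\delta_{kj}$. For $i^*\in\mathbb{N}$, the clipping $\mathrm{cl}_{i^*}:V\to V$ is $\mathrm{cl}_{i^*}(v)_i=v_i$ for $i<i^*$, $\sum_{j\ge i^*}v_j$ for $i=i^*$, $0$ for $i>i^*$. For $n\in\mathbb{N}_+$ and $k\in\{0,\dots,n\}$ let $\gamma_{k,n}=\sum_{j=0}^{k}\binom{n}{j}{\rm e}_{n-j}\in V$. The binomial bound matrix $B_n\in\mathbb{N}^{(n+1)\times(n+1)}$ is defined by $(B_n)_{a,b}=(\mathrm{cl}_{b-1}(\gamma_{b-1,n}))_{a-1}$ for $a,b\in\{1,\dots,n+1\}$. $\|\cdot\|_1$ is the sum of absolute values of entries. *)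

theory Defs
  imports Main "Jordan_Normal_Form.Matrix"
begin

text \<open>Elements of V are modelled as functions nat \<Rightarrow> nat (finitely supported where relevant).\<close>

definition ev :: "nat \<Rightarrow> nat \<Rightarrow> nat" where
  "ev k = (\<lambda>j. if j = k then 1 else 0)"

definition clip :: "nat \<Rightarrow> (nat \<Rightarrow> nat) \<Rightarrow> nat \<Rightarrow> nat" where
  "clip istar v = (\<lambda>i. if i < istar then v i
                       else if i = istar then (\<Sum>j\<in>{j. istar \<le> j \<and> v j \<noteq> 0}. v j)
                       else 0)"

definition gamma :: "nat \<Rightarrow> nat \<Rightarrow> nat \<Rightarrow> nat" where
  "gamma k n = (\<lambda>m. \<Sum>j=0..k. (n choose j) * ev (n - j) m)"

text \<open>Binomial bound matrix, 0-indexed: entry (a,b) is cl_b(gamma_{b,n})_a.\<close>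
definition binom_bound_mat :: "nat \<Rightarrow> real mat" where
  "binom_bound_mat n = mat (n + 1) (n + 1) (\<lambda>(a, b). real (clip b (gamma b n) a))"

definition norm1_vec :: "real vec \<Rightarrow> real" where
  "norm1_vec v = (\<Sum>i<dim_vec v. \<bar>v $ i\<bar>)"

end

theory Submission imports Defs begin

definition Sb :: "nat \<Rightarrow> nat \<Rightarrow> real" where
  "Sb n k = (\<Sum>j=0..k. real (n choose j))"

definition Ee :: "nat \<Rightarrow> nat \<Rightarrow> nat \<Rightarrow> real" where
  "Ee n a b = (if b \<le> n div 2 then (if a = b then Sb n b else 0)
     else (if n - b \<le> a \<and> a < b then real (n choose (n - a)) else if a = b then Sb n (n - b) else 0))"

lemma gamma_eq:
  assumes "b \<le> n"
  shows "gamma b n m = (if n - b \<le> m \<and> m \<le> n then n choose (n - m) else 0)"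
proof -
  have "gamma b n m = (\<Sum>j=0..b. if j = n - m \<and> m \<le> n then n choose j else 0)"
    unfolding gamma_def ev_def by (rule sum.cong) auto
  also have "\<dots> = (\<Sum>j\<in>{0..b}. if j = n - m then (if m \<le> n then n choose j else 0) else 0)"
    by (rule sum.cong) auto
  also have "\<dots> = (if n - m \<in> {0..b} then (if m \<le> n then n choose (n - m) else 0) else 0)"
    by (subst sum.delta) auto
  finally show ?thesis using assms by auto
qed

lemma sum_tail:
  assumes "c \<le> n"
  shows "(\<Sum>j\<in>{c..n}. n choose (n - j)) = (\<Sum>k=0..n-c. n choose k)"
proof -
  have "(\<Sum>j\<in>{c..n}. n choose (n - j)) = (\<Sum>j\<in>{0..n-c}. n choose (n - (j + c)))"
    using sum.atLeastAtMost_shift_0[of c n "\<lambda>j. n choose (n - j)"] assms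
    by (simp add: comp_def add.commute)
  also have "\<dots> = (\<Sum>j\<in>{0..n-c}. n choose ((n - c) + 0 - j))"
    by (rule sum.cong) (auto simp: add.commute)
  also have "\<dots> = (\<Sum>k=0..n-c. n choose k)"
    by (rule sum.atLeastAtMost_rev[symmetric])
  finally show ?thesis .
qed

lemma entry:
  assumes "a \<le> n" "b \<le> n"
  shows "real (clip b (gamma b n) a) = Ee n a b"
proof -
  have set: "{j. b \<le> j \<and> gamma b n j \<noteq> 0} = {max b (n - b)..n}"
    using assms by (auto simp: gamma_eq)
  have cs: "(\<Sum>j\<in>{j. b \<le> j \<and> gamma b n j \<noteq> 0}. gamma b n j) = (\<Sum>k=0..n - max b (n-b). n choose k)"
  proof -
    have "(\<Sum>j\<in>{max b (n - b)..n}. gamma b n j) = (\<Sum>j\<in>{max b (n - b)..n}. n choose (n - j))"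
      using assms by (intro sum.cong) (auto simp: gamma_eq)
    also have "\<dots> = (\<Sum>k=0..n - max b (n-b). n choose k)"
      using assms by (intro sum_tail) auto
    finally show ?thesis unfolding set .
  qed
  show ?thesis
  proof (cases "b \<le> n div 2")
    case True
    then have "max b (n - b) = n - b" by auto
    then show ?thesis using True assms unfolding clip_def Ee_def Sb_def cs
      by (auto simp: gamma_eq)
  next
    case False
    then have "max b (n - b) = b" by auto
    then show ?thesis using False assms unfolding clip_def Ee_def Sb_def cs
      by (auto simp: gamma_eq)
  qed
qed

definition gf :: "nat \<Rightarrow> nat \<Rightarrow> nat \<Rightarrow> real" where
  "gf n m b = Sb n (n div 2) ^ m + real m * (\<Sum>s=n div 2 + 1..b. Sb n (n - s) ^ (m - 1) * real (n choose (n - s)))"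

definition ff :: "nat \<Rightarrow> nat \<Rightarrow> nat \<Rightarrow> real" where
  "ff n m b = (if b \<le> n div 2 then Sb n b ^ m else gf n m b)"

lemma ff_ge: "n div 2 \<le> b \<Longrightarrow> ff n m b = gf n m b"
  by (cases "b = n div 2") (auto simp: ff_def gf_def)

lemma pow_aux: "real m * x ^ (m - 1) * x = real m * (x::real) ^ m"
  by (cases m) auto

lemma gf_Suc: "n div 2 \<le> b \<Longrightarrow> gf n m (Suc b) = gf n m b + real m * Sb n (n - Suc b) ^ (m - 1) * real (n choose (n - Suc b))"
  unfolding gf_def by (simp add: algebra_simps)

definition RR :: "nat \<Rightarrow> nat \<Rightarrow> nat \<Rightarrow> real" where
  "RR n m b = (\<Sum>k\<in>{n-b..<b}. ff n m k * real (n choose (n - k))) + ff n m b * Sb n (n - b)"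

lemma RR_base: "RR n m (n - n div 2) = gf n (Suc m) (n - n div 2)"
proof (cases "even n")
  case True
  then have e: "n - n div 2 = n div 2" by auto
  show ?thesis unfolding RR_def e by (simp add: ff_def gf_def e)
next
  case False
  define h where "h = n div 2"
  have n: "n = 2*h+1" using False unfolding h_def by presburger
  have e: "n - n div 2 = h + 1" "n - (h+1) = h" using n h_def by auto
  have c: "n choose (h+1) = n choose h" using n binomial_symmetric[of h n] by simp
  have "RR n m (h+1) = Sb n h ^ m * real (n choose (h+1)) + gf n m (h+1) * Sb n h"
    unfolding RR_def e by (simp add: ff_def h_def e)
  also have "\<dots> = gf n (Suc m) (h+1)"
    unfolding gf_def h_def[symmetric] c using e(2) pow_aux[of m "Sb n h"]
    by (simp add: algebra_simps) blast
  finally show ?thesis using e by simp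
qed

lemma RR_step:
  assumes "n - n div 2 \<le> b" "Suc b \<le> n"
  shows "RR n m (Suc b) = RR n m b + real (Suc m) * Sb n (n - Suc b) ^ m * real (n choose (n - Suc b))"
proof -
  define h where "h = n div 2"
  have hb: "h \<le> b" "n - b \<le> b" "n - Suc b \<le> h" using assms unfolding h_def by auto
  define T where "T = Sb n (n - Suc b)"
  define c where "c = real (n choose (n - Suc b))"
  define c' where "c' = real (n choose (n - b))"
  define X where "X = (\<Sum>k\<in>{n-b..<b}. ff n m k * real (n choose (n - k)))"
  have suc: "Suc (n - Suc b) = n - b" using assms by auto
  have sum: "(\<Sum>k\<in>{n - Suc b..<Suc b}. ff n m k * real (n choose (n - k)))
      = ff n m (n - Suc b) * real (n choose (n - (n - Suc b))) + X + ff n m b * c'"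
  proof -
    have "(\<Sum>k\<in>{n - Suc b..<Suc b}. ff n m k * real (n choose (n - k)))
       = (\<Sum>k\<in>{n - Suc b..<b}. ff n m k * real (n choose (n - k))) + ff n m b * c'"
      using hb by (simp add: c'_def)
    also have "(\<Sum>k\<in>{n - Suc b..<b}. ff n m k * real (n choose (n - k)))
       = ff n m (n - Suc b) * real (n choose (n - (n - Suc b))) + X"
      unfolding X_def using hb suc by (subst sum.atLeast_Suc_lessThan) auto
    finally show ?thesis .
  qed
  have cc: "n choose (n - (n - Suc b)) = n choose (n - Suc b)"
    using assms binomial_symmetric[of "Suc b" n] by auto
  have ffl: "ff n m (n - Suc b) = T ^ m" using hb unfolding ff_def T_def h_def by simp
  have Sbs: "Sb n (n - b) = T + c'"
    unfolding Sb_def T_def c'_def suc[symmetric] by simp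
  have "RR n m (Suc b) = T^m * c + X + gf n m b * c' + gf n m (Suc b) * T"
    unfolding RR_def sum ffl cc using hb ff_ge[of n b m] ff_ge[of n "Suc b" m]
    by (simp add: c_def h_def T_def)
  also have "\<dots> = T^m * c + X + gf n m b * c' + (gf n m b + real m * T ^ (m - 1) * c) * T"
    using gf_Suc[of n b m] hb by (simp add: h_def T_def c_def)
  also have "\<dots> = RR n m b + real (Suc m) * T ^ m * c"
    unfolding RR_def X_def[symmetric] Sbs using hb ff_ge[of n b m] pow_aux[of m T]
    by (simp add: h_def algebra_simps)
  finally show ?thesis unfolding T_def c_def .
qed

lemma RR_gf:
  assumes "n - n div 2 \<le> b" "b \<le> n"
  shows "RR n m b = gf n (Suc m) b"
proof -
  have "\<forall>b. b = n - n div 2 + d \<longrightarrow> b \<le> n \<longrightarrow> RR n m b = gf n (Suc m) b" for d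
  proof (induction d)
    case 0 then show ?case using RR_base by auto
  next
    case (Suc d)
    show ?case
    proof (intro allI impI)
      fix b assume b: "b = n - n div 2 + Suc d" "b \<le> n"
      define b' where "b' = n - n div 2 + d"
      have bb: "b = Suc b'" using b b'_def by simp
      have "RR n m b = RR n m b' + real (Suc m) * Sb n (n - Suc b') ^ m * real (n choose (n - Suc b'))"
        unfolding bb
      proof (rule RR_step)
        show "n - n div 2 \<le> b'" unfolding b'_def by (rule le_add1)
        show "Suc b' \<le> n" using b bb by simp
      qed
      also have "RR n m b' = gf n (Suc m) b'" using Suc b bb b'_def by auto
      also have "gf n (Suc m) b' + real (Suc m) * Sb n (n - Suc b') ^ m * real (n choose (n - Suc b')) = gf n (Suc m) b"
        unfolding bb by (subst gf_Suc) (auto simp: b'_def)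
      finally show "RR n m b = gf n (Suc m) b" .
    qed
  qed
  then show ?thesis using assms by (metis le_add_diff_inverse)
qed

lemma key:
  assumes "b \<le> n"
  shows "(\<Sum>k<Suc n. ff n m k * Ee n k b) = ff n (Suc m) b"
proof (cases "b \<le> n div 2")
  case True
  have "(\<Sum>k<Suc n. ff n m k * Ee n k b) = (\<Sum>k<Suc n. if k = b then ff n m b * Sb n b else 0)"
    using True by (intro sum.cong) (auto simp: Ee_def)
  also have "\<dots> = ff n m b * Sb n b" using assms by (subst sum.delta) auto
  finally show ?thesis using True by (simp add: ff_def)
next
  case False
  have "(\<Sum>k<Suc n. ff n m k * Ee n k b) = (\<Sum>k<Suc n. (if k \<in> {n-b..<b} then ff n m k * real (n choose (n - k)) else 0)
     + (if k = b then ff n m b * Sb n (n - b) else 0))"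
    using False by (intro sum.cong) (auto simp: Ee_def)
  also have "\<dots> = (\<Sum>k\<in>{..<Suc n} \<inter> {n-b..<b}. ff n m k * real (n choose (n - k))) + ff n m b * Sb n (n - b)"
    unfolding sum.distrib
  proof (rule arg_cong2[where f="(+)"])
    show "(\<Sum>k<Suc n. if k \<in> {n-b..<b} then ff n m k * real (n choose (n - k)) else 0) =
      (\<Sum>k\<in>{..<Suc n} \<inter> {n-b..<b}. ff n m k * real (n choose (n - k)))"
      by (rule sum.inter_restrict[symmetric]) simp
    show "(\<Sum>k<Suc n. if k = b then ff n m b * Sb n (n - b) else 0) = ff n m b * Sb n (n - b)"
      using assms by (subst sum.delta) auto
  qed
  also have "{..<Suc n} \<inter> {n-b..<b} = {n-b..<b}" using assms by auto
  finally have "(\<Sum>k<Suc n. ff n m k * Ee n k b) = RR n m b" unfolding RR_def by simp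
  also have "\<dots> = gf n (Suc m) b" using False assms by (intro RR_gf) auto
  finally show ?thesis using False by (simp add: ff_def)
qed

lemma Ee_nonneg: "0 \<le> Ee n a b"
  unfolding Ee_def Sb_def by (auto intro: sum_nonneg)

lemma B_entry: "a < Suc n \<Longrightarrow> b < Suc n \<Longrightarrow> binom_bound_mat n $$ (a, b) = Ee n a b"
  unfolding binom_bound_mat_def by (simp add: entry)

lemma B_carrier: "binom_bound_mat n \<in> carrier_mat (Suc n) (Suc n)"
  unfolding binom_bound_mat_def by simp

lemma pow_cols:
  "(\<forall>a<Suc n. \<forall>b<Suc n. 0 \<le> (binom_bound_mat n ^\<^sub>m l) $$ (a, b)) \<and>
   (\<forall>b<Suc n. (\<Sum>a<Suc n. (binom_bound_mat n ^\<^sub>m l) $$ (a, b)) = ff n l b)"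
proof (induction l)
  case 0
  have d: "dim_row (binom_bound_mat n) = Suc n" using B_carrier by auto
  have "(\<Sum>a<Suc n. (1\<^sub>m (Suc n) :: real mat) $$ (a, b)) = 1" if "b < Suc n" for b
  proof -
    have "(\<Sum>a<Suc n. (1\<^sub>m (Suc n) :: real mat) $$ (a, b)) = (\<Sum>a<Suc n. if a = b then 1 else 0)"
      using that by (intro sum.cong) auto
    also have "\<dots> = 1" using that by (subst sum.delta) auto
    finally show ?thesis .
  qed
  then show ?case unfolding pow_mat.simps d by (auto simp: ff_def gf_def)
next
  case (Suc l)
  let ?B = "binom_bound_mat n"
  let ?P = "?B ^\<^sub>m l"
  have P: "?P \<in> carrier_mat (Suc n) (Suc n)" using B_carrier by (rule pow_carrier_mat)
  have ent: "(?P * ?B) $$ (a, b) = (\<Sum>k<Suc n. ?P $$ (a, k) * Ee n k b)"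
    if "a < Suc n" "b < Suc n" for a b
  proof -
    have dims: "dim_row ?P = Suc n" "dim_col ?B = Suc n" "dim_col ?P = Suc n" "dim_row ?B = Suc n"
      using P B_carrier[of n] by auto
    have "(?P * ?B) $$ (a, b) = row ?P a \<bullet> col ?B b"
      using that dims by simp
    also have "\<dots> = (\<Sum>k\<in>{0..<Suc n}. ?P $$ (a, k) * ?B $$ (k, b))"
      unfolding scalar_prod_def using that dims by (intro sum.cong) auto
    also have "\<dots> = (\<Sum>k<Suc n. ?P $$ (a, k) * Ee n k b)"
      using that by (intro sum.cong) (auto simp: B_entry)
    finally show ?thesis .
  qed
  have nn: "\<forall>a<Suc n. \<forall>b<Suc n. 0 \<le> (?P * ?B) $$ (a, b)"
  proof (intro allI impI)
    fix a b assume ab: "a < Suc n" "b < Suc n"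
    have "0 \<le> (\<Sum>k<Suc n. ?P $$ (a, k) * Ee n k b)"
      using Suc.IH ab by (intro sum_nonneg mult_nonneg_nonneg Ee_nonneg) auto
    then show "0 \<le> (?P * ?B) $$ (a, b)" using ent[OF ab] by simp
  qed
  have cs: "(\<Sum>a<Suc n. (?P * ?B) $$ (a, b)) = ff n (Suc l) b" if "b < Suc n" for b
  proof -
    have "(\<Sum>a<Suc n. (?P * ?B) $$ (a, b)) = (\<Sum>a<Suc n. \<Sum>k<Suc n. ?P $$ (a, k) * Ee n k b)"
      using that ent by (intro sum.cong) auto
    also have "\<dots> = (\<Sum>k<Suc n. \<Sum>a<Suc n. ?P $$ (a, k) * Ee n k b)"
      by (rule sum.swap)
    also have "\<dots> = (\<Sum>k<Suc n. ff n l k * Ee n k b)"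
      using Suc.IH by (intro sum.cong) (auto simp: sum_distrib_right[symmetric])
    also have "\<dots> = ff n (Suc l) b" using that by (intro key) auto
    finally show ?thesis .
  qed
  show ?case using nn cs by simp
qed

theorem mainTheorem10:
  fixes n i l :: nat
  assumes "0 < n" and "i \<le> n" and "0 < l"
  shows "norm1_vec ((binom_bound_mat n ^\<^sub>m l) *\<^sub>v unit_vec (n + 1) i) =
    (if i \<le> n div 2 then (\<Sum>j=0..i. real (n choose j)) ^ l
     else (\<Sum>j=0..n div 2. real (n choose j)) ^ l
          + real l * (\<Sum>s=n div 2 + 1..i. (\<Sum>j=0..n - s. real (n choose j)) ^ (l - 1)
                                              * real (n choose (n - s))))"
proof -
  let ?P = "binom_bound_mat n ^\<^sub>m l"
  have P: "?P \<in> carrier_mat (Suc n) (Suc n)" using B_carrier by (rule pow_carrier_mat)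
  have i: "i < Suc n" using assms by simp
  have v: "(?P *\<^sub>v unit_vec (Suc n) i) $ a = ?P $$ (a, i)" if "a < Suc n" for a
  proof -
    have dims: "dim_row ?P = Suc n" "dim_col ?P = Suc n" using P by auto
    have "(?P *\<^sub>v unit_vec (Suc n) i) $ a = row ?P a \<bullet> unit_vec (Suc n) i"
      using that dims by simp
    also have "\<dots> = (\<Sum>j\<in>{0..<Suc n}. ?P $$ (a, j) * (if j = i then 1 else 0))"
      unfolding scalar_prod_def using that dims i by (intro sum.cong) auto
    also have "\<dots> = (\<Sum>j\<in>{0..<Suc n}. if j = i then ?P $$ (a, j) else 0)"
      by (intro sum.cong) auto
    also have "\<dots> = ?P $$ (a, i)" using i by (subst sum.delta) auto
    finally show ?thesis .
  qed
  have "norm1_vec (?P *\<^sub>v unit_vec (Suc n) i) = (\<Sum>a<Suc n. \<bar>?P $$ (a, i)\<bar>)"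
    unfolding norm1_vec_def using P v by (intro sum.cong) auto
  also have "\<dots> = (\<Sum>a<Suc n. ?P $$ (a, i))"
    using pow_cols[of n l] i by (intro sum.cong) auto
  also have "\<dots> = ff n l i" using pow_cols[of n l] i by auto
  finally show ?thesis unfolding ff_def gf_def Sb_def by simp
qed

end
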